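(* Let $\mathcal{G}_1,\mathcal{G}_2,\ldots$ be classes of functions from $S$ to $[0,1]$ and $K>0$ a constant such that for every $j$ there exists $M_j\ge 1$ with, for all $n\ge1$ and all $0<\epsilon<1$, \[ P\Big\{\sup_{g\in\mathcal{G}_j}|L(g)-\widehat{L}_n(g)|>\epsilon\Big\}\le K\,2^j\sqrt{j}^{\,j}\Big(\frac{M_j}{\epsilon}\Big)^j\exp(-n\epsilon^2/128). \] Define the complexity penalty $r(n,j)=\sqrt{\dfrac{128\,j\log(2j^{1/2}M_j n)}{n}}$. Let the random pair $(X,Y)$ be such that $\inf_j\inf_{g\in\mathcal{G}_j}L(g)=L^*$. Then the estimator $g^*_n$ based on Structural Risk Minimization (with this penalty) is strongly consistent, i.e. $L(g^*_n)\to L^*$ almost surely.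
   Context: $S\subset\mathbb{R}^d$. $(X,Y)$ is a random pair with values in $S\times[0,1]$ and $(X_1,Y_1),\ldots,(X_n,Y_n)$ is an i.i.d. sample from its distribution. For $g:S\to[0,1]$, $L(g)=E[(g(X)-Y)^2]$ (conditional on the sample for data-dependent $g$) and $\widehat{L}_n(g)=\frac1n\sum_{i=1}^n(g(X_i)-Y_i)^2$. $L^*$ is the infimum of $L(g)$ over all measurable $g$. For each $j$, $\hat g_{n,j}$ minimizes $\widehat{L}_n$ over $\mathcal{G}_j$ (assumed to exist); $\widetilde{L}_{n,j}=\widehat{L}_n(\hat g_{n,j})+r(n,j)$; $g^*_n$ is a function among the $\hat g_{n,j}$ minimizing $\widetilde{L}_{n,j}$ over $j$. Suprema over function classes are assumed measurable. *)

theory Defs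
  imports "HOL-Probability.Probability"
begin

definition risk :: "('a::euclidean_space \<times> real) measure \<Rightarrow> ('a \<Rightarrow> real) \<Rightarrow> real" where
  "risk D g = (\<integral>z. (g (fst z) - snd z)^2 \<partial>D)"

definition emp_risk :: "(nat \<Rightarrow> 'w \<Rightarrow> 'a \<times> real) \<Rightarrow> nat \<Rightarrow> ('a \<Rightarrow> real) \<Rightarrow> 'w \<Rightarrow> real" where
  "emp_risk Z n g \<omega> = (\<Sum>i=1..n. (g (fst (Z i \<omega>)) - snd (Z i \<omega>))^2) / real n"

definition meas_fun :: "'a::euclidean_space set \<Rightarrow> ('a \<Rightarrow> real) set" where
  "meas_fun S = {g. g \<in> borel_measurable borel \<and> (\<forall>x\<in>S. g x \<in> {0..1})}"

definition bayes_risk :: "('a::euclidean_space \<times> real) measure \<Rightarrow> 'a set \<Rightarrow> real" where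
  "bayes_risk D S = (INF g \<in> meas_fun S. risk D g)"

definition srm_penalty :: "(nat \<Rightarrow> real) \<Rightarrow> nat \<Rightarrow> nat \<Rightarrow> real" where
  "srm_penalty Mj n j = sqrt (128 * real j * ln (2 * sqrt (real j) * Mj j * real n) / real n)"

end

theory Submission imports Defs "HOL-Real_Asymp.Real_Asymp" begin

lemma risk_bounds:
  fixes D :: "('a::euclidean_space \<times> real) measure"
  assumes probD: "prob_space D" and sD: "sets D = sets borel"
    and D_supp: "AE z in D. z \<in> S \<times> {0..1}" and g: "g \<in> meas_fun S"
  shows "0 \<le> risk D g \<and> risk D g \<le> 1"
proof -
  interpret prob_space D by fact
  have gm: "g \<in> borel_measurable borel" using g by (simp add: meas_fun_def)
  have fm: "(\<lambda>z::'a\<times>real. (g (fst z) - snd z)^2) \<in> borel_measurable borel"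
    using gm by (auto simp: borel_prod[symmetric])
  hence fmD: "(\<lambda>z::'a\<times>real. (g (fst z) - snd z)^2) \<in> borel_measurable D"
    using measurable_cong_sets[OF sD refl] by blast
  have ae: "AE z in D. 0 \<le> (g (fst z) - snd z)^2 \<and> (g (fst z) - snd z)^2 \<le> 1"
    using D_supp
  proof (rule AE_mp, intro AE_I2 impI)
    fix z :: "'a \<times> real" assume "z \<in> S \<times> {0..1}"
    then have "g (fst z) \<in> {0..1}" "snd z \<in> {0..1}" using g by (auto simp: meas_fun_def)
    then have "\<bar>g (fst z) - snd z\<bar> \<le> 1" by auto
    then show "0 \<le> (g (fst z) - snd z)^2 \<and> (g (fst z) - snd z)^2 \<le> 1"
      by (metis abs_ge_zero abs_square_le_1 zero_le_power2)
  qed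
  have int: "integrable D (\<lambda>z. (g (fst z) - snd z)^2)"
    by (rule integrable_const_bound[where B=1]) (use ae fmD in auto)
  have "risk D g \<le> (\<integral>z. 1 \<partial>D)"
    unfolding risk_def by (rule integral_mono_AE) (use int ae in auto)
  moreover have "0 \<le> risk D g" unfolding risk_def
    by (rule integral_nonneg_AE) (use ae in auto)
  ultimately show ?thesis using prob_space by simp
qed

lemma emp_bounds:
  assumes n: "n \<ge> 1" and Zv: "\<forall>i\<ge>1. Z i \<omega> \<in> S \<times> {0..1}" and g: "g \<in> meas_fun S"
  shows "0 \<le> emp_risk Z n g \<omega> \<and> emp_risk Z n g \<omega> \<le> 1"
proof -
  have b: "0 \<le> (g (fst (Z i \<omega>)) - snd (Z i \<omega>))^2 \<and> (g (fst (Z i \<omega>)) - snd (Z i \<omega>))^2 \<le> 1"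
    if "i \<in> {1..n}" for i
  proof -
    have "Z i \<omega> \<in> S \<times> {0..1}" using Zv that by auto
    then have "g (fst (Z i \<omega>)) \<in> {0..1}" "snd (Z i \<omega>) \<in> {0..1}" using g by (auto simp: meas_fun_def mem_Times_iff)
    then have "\<bar>g (fst (Z i \<omega>)) - snd (Z i \<omega>)\<bar> \<le> 1" by auto
    then show ?thesis by (metis abs_ge_zero abs_square_le_1 zero_le_power2)
  qed
  have "(\<Sum>i=1..n. (g (fst (Z i \<omega>)) - snd (Z i \<omega>))^2) \<le> (\<Sum>i=1..n. 1)"
    by (rule sum_mono) (use b in auto)
  moreover have "0 \<le> (\<Sum>i=1..n. (g (fst (Z i \<omega>)) - snd (Z i \<omega>))^2)"
    by (rule sum_nonneg) (use b in auto)
  ultimately show ?thesis using n unfolding emp_risk_def by (auto simp: divide_le_eq)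
qed

lemma pen_lim:
  assumes "c \<ge> 1" "j \<ge> (1::nat)"
  shows "(\<lambda>n. srm_penalty (\<lambda>_. c) n j) \<longlonglongrightarrow> 0"
proof -
  have "(\<lambda>n. 128 * real j * ln (2 * sqrt (real j) * c * real n) / real n) \<longlonglongrightarrow> 0"
  proof -
    define a where "a = 2 * sqrt (real j) * c"
    have a: "a > 0" unfolding a_def using assms by auto
    have "(\<lambda>n. 128 * real j * ln (a * real n) / real n) \<longlonglongrightarrow> 0"
      using a by real_asymp
    then show ?thesis by (simp add: a_def)
  qed
  then have "(\<lambda>n. sqrt (128 * real j * ln (2 * sqrt (real j) * c * real n) / real n)) \<longlonglongrightarrow> sqrt 0"
    by (intro tendsto_intros)
  then show ?thesis by (simp add: srm_penalty_def)
qed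

lemma (in prob_space) bc_exp:
  assumes A: "\<And>n. A n \<in> events" and a: "a > 0"
    and b: "\<And>n. n \<ge> N \<Longrightarrow> prob (A n) \<le> C * exp (- a * real n)"
  shows "AE x in M. eventually (\<lambda>n. x \<notin> A n) sequentially"
proof -
  have sg: "summable (\<lambda>n. C * exp (- a * real n))"
  proof -
    have "summable (\<lambda>n. C * exp (- a) ^ n)"
      using a by (intro summable_mult summable_geometric) auto
    moreover have "exp (- a) ^ n = exp (- a * real n)" for n
      by (metis exp_of_nat_mult mult.commute)
    ultimately show ?thesis by simp
  qed
  have "summable (\<lambda>n. prob (A n))"
    by (rule summable_comparison_test'[OF sg, of N]) (use b in auto)
  then have "AE x in M. eventually (\<lambda>n. x \<in> space M - A n) sequentially"
    by (intro borel_cantelli_AE1) (use A in \<open>auto simp: emeasure_eq_measure\<close>)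
  then show ?thesis by (rule AE_mp) (auto elim: eventually_mono)
qed

lemma key_arith:
  fixes j n :: nat and c e K :: real
  assumes j: "j \<ge> 1" and n: "n \<ge> 1" and c: "c \<ge> 1" and e: "0 < e" and K: "K > 0"
  defines "r \<equiv> srm_penalty (\<lambda>_. c) n j"
  shows "K * 2 ^ j * sqrt (real j) ^ j * (c / (e + r)) ^ j * exp (- real n * (e + r)\<^sup>2 / 128)
         \<le> K * exp (- real n * e\<^sup>2 / 128) / (e * real n) ^ j"
proof -
  define x where "x = 2 * sqrt (real j) * c * real n"
  have x1: "x \<ge> 1" unfolding x_def using j n c
    by (metis (no_types, lifting) mult_ge1_I of_nat_1 of_nat_mono one_le_numeral real_sqrt_ge_one)
  have lx: "ln x \<ge> 0" using x1 by simp
  have r_def': "r = sqrt (128 * real j * ln x / real n)" unfolding r_def srm_penalty_def x_def by simp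
  have r0: "r \<ge> 0" unfolding r_def' using lx by simp
  have rsq: "real n * r\<^sup>2 / 128 = real j * ln x" unfolding r_def' using lx n by simp
  have ex: "exp (- real n * r\<^sup>2 / 128) = 1 / x ^ j"
  proof -
    have "exp (- real n * r\<^sup>2 / 128) = exp (- (real j * ln x))" using rsq by (simp add: field_simps)
    also have "\<dots> = 1 / exp (ln (x ^ j))" using x1 by (simp add: ln_realpow exp_minus field_simps)
    also have "\<dots> = 1 / x ^ j" using x1 by simp
    finally show ?thesis .
  qed
  have p1: "(c / (e + r)) ^ j \<le> (c / e) ^ j"
    using c e r0 by (intro power_mono divide_left_mono) auto
  have p2: "exp (- real n * (e + r)\<^sup>2 / 128) \<le> exp (- real n * e\<^sup>2 / 128) * exp (- real n * r\<^sup>2 / 128)"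
  proof -
    have "(e + r)\<^sup>2 \<ge> e\<^sup>2 + r\<^sup>2" using e r0 by (simp add: power2_eq_square algebra_simps)
    then have "- real n * (e + r)\<^sup>2 / 128 \<le> - real n * e\<^sup>2 / 128 + - real n * r\<^sup>2 / 128"
      by (simp add: field_simps) (metis distrib_left mult_left_mono of_nat_0_le_iff)
    then show ?thesis by (simp add: exp_add[symmetric])
  qed
  have "K * 2 ^ j * sqrt (real j) ^ j * (c / (e + r)) ^ j * exp (- real n * (e + r)\<^sup>2 / 128)
      \<le> K * 2 ^ j * sqrt (real j) ^ j * (c / e) ^ j * (exp (- real n * e\<^sup>2 / 128) * exp (- real n * r\<^sup>2 / 128))"
    using K p1 p2 c e r0 by (intro mult_mono mult_left_mono) auto
  also have "\<dots> = K * exp (- real n * e\<^sup>2 / 128) * (2 ^ j * sqrt (real j) ^ j * c ^ j / (e ^ j * x ^ j))"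
    unfolding ex by (simp add: power_divide field_simps)
  also have "2 ^ j * sqrt (real j) ^ j * c ^ j / (e ^ j * x ^ j) = 1 / (e * real n) ^ j"
    using j n c e unfolding x_def by (simp add: power_mult_distrib field_simps)
  finally show ?thesis by simp
qed

lemma set_gt_meas:
  assumes [measurable]: "f \<in> borel_measurable M"
  shows "{x\<in>space M. c < (f x::real)} \<in> sets M"
  by measurable

lemma pen_nonneg:
  assumes "j \<ge> 1" "n \<ge> 1" "Mj j \<ge> 1"
  shows "srm_penalty Mj n j \<ge> 0"
proof -
  have "2 * sqrt (real j) * Mj j * real n \<ge> 1" using assms
    by (metis (no_types, lifting) mult_ge1_I of_nat_1 of_nat_mono one_le_numeral real_sqrt_ge_one)
  then have "ln (2 * sqrt (real j) * Mj j * real n) \<ge> 0" by simp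
  then show ?thesis unfolding srm_penalty_def by simp
qed

theorem mainTheorem3:
  fixes M :: "'w measure"
    and D :: "('a::euclidean_space \<times> real) measure"
    and Z :: "nat \<Rightarrow> 'w \<Rightarrow> 'a \<times> real"
    and S :: "'a set"
    and G :: "nat \<Rightarrow> ('a \<Rightarrow> real) set"
    and K :: real
    and Mj :: "nat \<Rightarrow> real"
    and ghat :: "nat \<Rightarrow> nat \<Rightarrow> 'w \<Rightarrow> ('a \<Rightarrow> real)"
    and J :: "nat \<Rightarrow> 'w \<Rightarrow> nat"
  assumes probM: "prob_space M"
    and probD: "prob_space D"
    and D_supp: "AE z in D. z \<in> S \<times> {0..1}"
    and indep: "prob_space.indep_vars M (\<lambda>_. borel) Z {1..}"
    and distr_Z: "\<forall>i\<ge>1. distr M borel (Z i) = D"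
    and Z_vals: "\<forall>i\<ge>1. \<forall>\<omega>\<in>space M. Z i \<omega> \<in> S \<times> {0..1}"
    and G_sub: "\<forall>j\<ge>1. G j \<subseteq> meas_fun S"
    and sup_meas: "\<forall>j\<ge>1. \<forall>n\<ge>1.
          (\<lambda>\<omega>. SUP g\<in>G j. \<bar>risk D g - emp_risk Z n g \<omega>\<bar>) \<in> borel_measurable M"
    and K_pos: "K > 0"
    and Mj_ge: "\<forall>j\<ge>1. Mj j \<ge> 1"
    and bound: "\<forall>j\<ge>1. \<forall>n\<ge>1. \<forall>\<epsilon>. 0 < \<epsilon> \<and> \<epsilon> < 1 \<longrightarrow>
          measure M {\<omega>\<in>space M. (SUP g\<in>G j. \<bar>risk D g - emp_risk Z n g \<omega>\<bar>) > \<epsilon>}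
            \<le> K * 2 ^ j * sqrt (real j) ^ j * (Mj j / \<epsilon>) ^ j * exp (- real n * \<epsilon>\<^sup>2 / 128)"
    and ghat_min: "\<forall>n\<ge>1. \<forall>j\<ge>1. \<forall>\<omega>\<in>space M. ghat n j \<omega> \<in> G j \<and>
          (\<forall>g\<in>G j. emp_risk Z n (ghat n j \<omega>) \<omega> \<le> emp_risk Z n g \<omega>)"
    and J_min: "\<forall>n\<ge>1. \<forall>\<omega>\<in>space M. J n \<omega> \<ge> 1 \<and>
          (\<forall>j\<ge>1. emp_risk Z n (ghat n (J n \<omega>) \<omega>) \<omega> + srm_penalty Mj n (J n \<omega>)
                   \<le> emp_risk Z n (ghat n j \<omega>) \<omega> + srm_penalty Mj n j)"
    and approx: "(INF j\<in>{1..}. INF g\<in>G j. risk D g) = bayes_risk D S"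
  shows "AE \<omega> in M. (\<lambda>n. risk D (ghat n (J n \<omega>) \<omega>)) \<longlonglongrightarrow> bayes_risk D S"
proof -
  interpret P: prob_space M by fact
  have sD: "sets D = sets borel"
    using distr_Z by (metis le_refl sets_distr)
  obtain \<omega>0 where \<omega>0: "\<omega>0 \<in> space M" using P.not_empty by blast
  have Gne: "G j \<noteq> {}" if "j \<ge> 1" for j
    using ghat_min \<omega>0 that by (metis empty_iff le_refl)
  have Gm: "g \<in> meas_fun S" if "j \<ge> 1" "g \<in> G j" for j g
    using G_sub that by blast
  have Rb: "0 \<le> risk D g \<and> risk D g \<le> 1" if "g \<in> meas_fun S" for g
    by (rule risk_bounds[OF probD sD D_supp that])
  have Eb: "0 \<le> emp_risk Z n g \<omega> \<and> emp_risk Z n g \<omega> \<le> 1"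
    if "n \<ge> 1" "\<omega> \<in> space M" "g \<in> meas_fun S" for n g \<omega>
    by (rule emp_bounds) (use that Z_vals in auto)
  define Dl where "Dl n j \<omega> = (SUP g\<in>G j. \<bar>risk D g - emp_risk Z n g \<omega>\<bar>)" for n j \<omega>
  have diff1: "\<bar>risk D g - emp_risk Z n g \<omega>\<bar> \<le> 1"
    if "j \<ge> 1" "n \<ge> 1" "\<omega> \<in> space M" "g \<in> G j" for j n \<omega> g
    using Rb[OF Gm[OF that(1,4)]] Eb[OF that(2,3) Gm[OF that(1,4)]] by auto
  have Dlub: "Dl n j \<omega> \<le> 1" if "j \<ge> 1" "n \<ge> 1" "\<omega> \<in> space M" for j n \<omega>
    unfolding Dl_def by (rule cSUP_least) (use Gne that diff1 in auto)
  have Dlge: "\<bar>risk D g - emp_risk Z n g \<omega>\<bar> \<le> Dl n j \<omega>"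
    if "j \<ge> 1" "n \<ge> 1" "\<omega> \<in> space M" "g \<in> G j" for j n \<omega> g
    unfolding Dl_def
    by (rule cSUP_upper) (use that diff1 in \<open>auto intro!: bdd_aboveI2[where M=1]\<close>)
  have Dlm: "Dl n j \<in> borel_measurable M" if "j \<ge> 1" "n \<ge> 1" for j n
    unfolding Dl_def using sup_meas that by auto
  have rpos: "srm_penalty Mj n j \<ge> 0" if "j \<ge> 1" "n \<ge> 1" for j n
    using pen_nonneg that Mj_ge by blast
  have tail: "P.prob {\<omega>\<in>space M. Dl n j \<omega> > e + srm_penalty Mj n j}
      \<le> K * exp (- real n * e\<^sup>2 / 128) / (e * real n) ^ j"
    if j: "j \<ge> 1" and n: "n \<ge> 1" and e: "0 < e" for j n e
  proof (cases "e + srm_penalty Mj n j < 1")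
    case True
    have r0: "srm_penalty Mj n j \<ge> 0" using rpos j n .
    have "P.prob {\<omega>\<in>space M. Dl n j \<omega> > e + srm_penalty Mj n j}
        \<le> K * 2 ^ j * sqrt (real j) ^ j * (Mj j / (e + srm_penalty Mj n j)) ^ j
            * exp (- real n * (e + srm_penalty Mj n j)\<^sup>2 / 128)"
      using bound j n e r0 True unfolding Dl_def by auto
    also have "\<dots> \<le> K * exp (- real n * e\<^sup>2 / 128) / (e * real n) ^ j"
    proof -
      have eq: "srm_penalty Mj n j = srm_penalty (\<lambda>_. Mj j) n j" by (simp add: srm_penalty_def)
      show ?thesis unfolding eq by (rule key_arith) (use j n e K_pos Mj_ge in auto)
    qed
    finally show ?thesis .
  next
    case False
    have "{\<omega>\<in>space M. Dl n j \<omega> > e + srm_penalty Mj n j} = {}"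
      using False Dlub[OF j n] by fastforce
    moreover have "0 \<le> K * exp (- real n * e\<^sup>2 / 128) / (e * real n) ^ j"
      using K_pos e by auto
    ultimately show ?thesis by (metis measure_empty)
  qed

  define e where "e k = 1 / (real k + 2)" for k :: nat
  have e0: "0 < e k" "e k < 1" for k unfolding e_def by auto
  define A1 where "A1 k n = (if n = 0 then {} else
     (\<Union>j. {\<omega>\<in>space M. Dl n (Suc j) \<omega> > e k + srm_penalty Mj n (Suc j)}))" for k n
  define A2 where "A2 j k n = (if n = 0 then {} else {\<omega>\<in>space M. Dl n (Suc j) \<omega> > e k})" for j k n
  have A1m: "A1 k n \<in> P.events" for k n
    unfolding A1_def using Dlm by (auto intro!: set_gt_meas sets.countable_UN')
  have A2m: "A2 j k n \<in> P.events" for j k n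
    unfolding A2_def using Dlm by (auto intro!: set_gt_meas)
  have ae1: "AE \<omega> in M. eventually (\<lambda>n. \<omega> \<notin> A1 k n) sequentially" for k
  proof (rule P.bc_exp[where A="A1 k" and a="e k ^ 2 / 128" and N="2 * (k + 2)" and C="2 * K"])
    show "\<And>n. A1 k n \<in> P.events" by (rule A1m)
    show "0 < e k ^ 2 / 128" using e0[of k] by simp
    fix n :: nat assume nN: "2 * (k + 2) \<le> n"
    then have n1: "n \<ge> 1" by simp
    have en: "e k * real n \<ge> 2" unfolding e_def using nN by (simp add: field_simps)
    define B where "B j = {\<omega>\<in>space M. Dl n (Suc j) \<omega> > e k + srm_penalty Mj n (Suc j)}" for j
    define c where "c = K * exp (- real n * (e k)\<^sup>2 / 128)"
    have c0: "c \<ge> 0" unfolding c_def using K_pos by simp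
    have Bb: "P.prob (B j) \<le> c * (1/2) ^ j" for j
    proof -
      have "P.prob (B j) \<le> c / (e k * real n) ^ Suc j"
        unfolding B_def c_def by (rule tail) (use n1 e0 in auto)
      also have "\<dots> \<le> c / 2 ^ j"
      proof (rule divide_left_mono[OF _ c0])
        have "(2::real) ^ j \<le> 2 ^ Suc j" by simp
        also have "\<dots> \<le> (e k * real n) ^ Suc j" using en by (intro power_mono) auto
        finally show "2 ^ j \<le> (e k * real n) ^ Suc j" .
      qed (use en in simp)
      finally show ?thesis by (simp add: power_divide)
    qed
    have sg: "summable (\<lambda>j. c * (1/2::real) ^ j)" by (intro summable_mult summable_geometric) auto
    have sB: "summable (\<lambda>j. P.prob (B j))"
      by (rule summable_comparison_test'[OF sg, of 0]) (use Bb in auto)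
    have "P.prob (A1 k n) = P.prob (\<Union>j. B j)" unfolding A1_def B_def using n1 by simp
    also have "\<dots> \<le> (\<Sum>j. P.prob (B j))"
      by (rule P.finite_measure_subadditive_countably[OF _ sB]) (use n1 in \<open>auto simp: B_def intro!: set_gt_meas Dlm\<close>)
    also have "\<dots> \<le> (\<Sum>j. c * (1/2::real) ^ j)"
      by (rule suminf_le[OF Bb sB sg])
    also have "\<dots> = c * 2" by (simp add: suminf_mult suminf_geometric)
    also have "\<dots> = 2 * K * exp (- (e k ^ 2 / 128) * real n)" unfolding c_def by (simp add: field_simps)
    finally show "P.prob (A1 k n) \<le> 2 * K * exp (- (e k ^ 2 / 128) * real n)" .
  qed
  have ae2: "AE \<omega> in M. eventually (\<lambda>n. \<omega> \<notin> A2 j k n) sequentially" for j k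
  proof (rule P.bc_exp[where A="A2 j k" and a="e k ^ 2 / 128" and N=1 and
        C="K * 2 ^ Suc j * sqrt (real (Suc j)) ^ Suc j * (Mj (Suc j) / e k) ^ Suc j"])
    show "\<And>n. A2 j k n \<in> P.events" by (rule A2m)
    show "0 < e k ^ 2 / 128" using e0[of k] by simp
    fix n :: nat assume n1: "1 \<le> n"
    have "P.prob (A2 j k n) \<le> K * 2 ^ Suc j * sqrt (real (Suc j)) ^ Suc j * (Mj (Suc j) / e k) ^ Suc j
        * exp (- real n * (e k)\<^sup>2 / 128)"
    proof -
      have "Suc j \<ge> 1" by simp
      with bound n1 e0[of k] have "P.prob {\<omega>\<in>space M. (SUP g\<in>G (Suc j). \<bar>risk D g - emp_risk Z n g \<omega>\<bar>) > e k}
        \<le> K * 2 ^ Suc j * sqrt (real (Suc j)) ^ Suc j * (Mj (Suc j) / e k) ^ Suc j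
        * exp (- real n * (e k)\<^sup>2 / 128)" by blast
      then show ?thesis unfolding A2_def Dl_def using n1 by simp
    qed
    then show "P.prob (A2 j k n) \<le> K * 2 ^ Suc j * sqrt (real (Suc j)) ^ Suc j * (Mj (Suc j) / e k) ^ Suc j
        * exp (- (e k ^ 2 / 128) * real n)" by (simp add: field_simps)
  qed
  have "AE \<omega> in M. \<omega> \<in> space M \<and> (\<forall>k. eventually (\<lambda>n. \<omega> \<notin> A1 k n) sequentially)
     \<and> (\<forall>j k. eventually (\<lambda>n. \<omega> \<notin> A2 j k n) sequentially)"
    using ae1 ae2 by (auto simp: AE_all_countable)
  then show ?thesis
  proof (rule AE_mp, intro AE_I2 impI, elim conjE)
    fix \<omega> assume \<omega>: "\<omega> \<in> space M"
      and g1: "\<forall>k. eventually (\<lambda>n. \<omega> \<notin> A1 k n) sequentially"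
      and g2: "\<forall>j k. eventually (\<lambda>n. \<omega> \<notin> A2 j k n) sequentially"
    define L where "L = bayes_risk D S"
    have bddm: "bdd_below (risk D ` meas_fun S)"
      using Rb by (auto intro!: bdd_belowI2[where m=0])
    have low: "L \<le> risk D (ghat n (J n \<omega>) \<omega>)" if n1: "n \<ge> 1" for n
    proof -
      have "J n \<omega> \<ge> 1" using J_min n1 \<omega> by blast
      moreover have "ghat n (J n \<omega>) \<omega> \<in> G (J n \<omega>)" using ghat_min n1 \<omega> calculation by blast
      ultimately have "ghat n (J n \<omega>) \<omega> \<in> meas_fun S" using Gm by blast
      then show ?thesis unfolding L_def bayes_risk_def by (rule cINF_lower[OF bddm])
    qed
    have up: "eventually (\<lambda>n. risk D (ghat n (J n \<omega>) \<omega>) < L + \<delta>) sequentially" if \<delta>: "\<delta> > 0" for \<delta>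
    proof -
      have bddG: "bdd_below (risk D ` G j)" if "j \<ge> 1" for j
        using Rb Gm that by (auto intro!: bdd_belowI2[where m=0])
      have infG0: "0 \<le> (INF g\<in>G j. risk D g)" if "j \<ge> 1" for j
        by (rule cINF_greatest) (use Gne Rb Gm that in auto)
      have bddJ: "bdd_below ((\<lambda>j. INF g\<in>G j. risk D g) ` {1..})"
        using infG0 by (auto intro!: bdd_belowI2[where m=0])
      have "(INF j\<in>{1..}. INF g\<in>G j. risk D g) < L + \<delta>/4" using approx \<delta> L_def by simp
      then obtain j where j: "j \<in> {1..}" and jI: "(INF g\<in>G j. risk D g) < L + \<delta>/4"
        using cINF_less_iff[OF _ bddJ] by blast
      have j1: "j \<ge> 1" using j by simp
      then obtain g where g: "g \<in> G j" and gL: "risk D g < L + \<delta>/4"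
        using jI cINF_less_iff[OF Gne[OF j1] bddG[OF j1]] by auto
      obtain k where k: "inverse (real (Suc k)) < \<delta>/4" using reals_Archimedean \<delta> by (metis divide_pos_pos zero_less_numeral)
      have ek: "e k < \<delta>/4"
      proof -
        have "e k \<le> inverse (real (Suc k))" unfolding e_def by (simp add: field_simps)
        then show ?thesis using k by simp
      qed
      have "(\<lambda>n. srm_penalty (\<lambda>_. Mj j) n j) \<longlonglongrightarrow> 0"
        by (rule pen_lim) (use Mj_ge j1 in auto)
      then have "eventually (\<lambda>n. srm_penalty (\<lambda>_. Mj j) n j < \<delta>/4) sequentially"
        using \<delta> by (intro order_tendstoD(2)) auto
      then have ev_r: "eventually (\<lambda>n. srm_penalty Mj n j < \<delta>/4) sequentially"
        by (simp add: srm_penalty_def)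
      have ev_n: "eventually (\<lambda>n. n \<ge> 1) sequentially" by (rule eventually_ge_at_top)
      from ev_r ev_n g1[rule_format, of k] g2[rule_format, of "j - 1" k]
      show ?thesis
      proof eventually_elim
        case (elim n)
        then have n1: "n \<ge> 1" and rj: "srm_penalty Mj n j < \<delta>/4" and nA1: "\<omega> \<notin> A1 k n"
          and nA2: "\<omega> \<notin> A2 (j - 1) k n" by auto
        define J' where "J' = J n \<omega>"
        have J1: "J' \<ge> 1" using J_min n1 \<omega> J'_def by blast
        have gJ: "ghat n J' \<omega> \<in> G J'" using ghat_min n1 \<omega> J1 by blast
        have "\<not> Dl n (Suc (J' - 1)) \<omega> > e k + srm_penalty Mj n (Suc (J' - 1))"
          using nA1 n1 \<omega> unfolding A1_def by auto
        then have dJ: "Dl n J' \<omega> \<le> e k + srm_penalty Mj n J'" using J1 by simp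
        have "\<not> Dl n (Suc (j - 1)) \<omega> > e k"
          using nA2 n1 \<omega> unfolding A2_def by auto
        then have dj: "Dl n j \<omega> \<le> e k" using j1 by simp
        have s1: "risk D (ghat n J' \<omega>) - emp_risk Z n (ghat n J' \<omega>) \<omega> \<le> Dl n J' \<omega>"
          using Dlge[OF J1 n1 \<omega> gJ] by simp
        have s2: "emp_risk Z n (ghat n J' \<omega>) \<omega> + srm_penalty Mj n J'
            \<le> emp_risk Z n (ghat n j \<omega>) \<omega> + srm_penalty Mj n j"
          using J_min n1 \<omega> j1 unfolding J'_def by blast
        have s3: "emp_risk Z n (ghat n j \<omega>) \<omega> \<le> emp_risk Z n g \<omega>"
          using ghat_min n1 \<omega> j1 g by blast
        have s4: "emp_risk Z n g \<omega> - risk D g \<le> Dl n j \<omega>"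
          using Dlge[OF j1 n1 \<omega> g] by simp
        have "risk D (ghat n J' \<omega>) < L + \<delta>"
          using s1 s2 s3 s4 dJ dj ek rj gL by linarith
        then show ?case unfolding J'_def L_def by simp
      qed
    qed
    show "(\<lambda>n. risk D (ghat n (J n \<omega>) \<omega>)) \<longlonglongrightarrow> bayes_risk D S"
    proof (rule order_tendstoI)
      fix a assume a: "a < bayes_risk D S"
      show "eventually (\<lambda>n. a < risk D (ghat n (J n \<omega>) \<omega>)) sequentially"
        using eventually_ge_at_top[of "1::nat"]
      proof (rule eventually_mono)
        fix n :: nat assume "1 \<le> n"
        then show "a < risk D (ghat n (J n \<omega>) \<omega>)" using low[of n] a L_def by simp
      qed
    next
      fix a assume "bayes_risk D S < a"
      then show "eventually (\<lambda>n. risk D (ghat n (J n \<omega>) \<omega>) < a) sequentially"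
        using up[of "a - bayes_risk D S"] L_def by simp
    qed
  qed
qed

end
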